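(* Let $L\dashv R:\mathcal{D}\rightleftarrows\mathcal{C}$ be an adjunction (with $L:\mathcal{D}\to\mathcal{C}$, unit $\eta$) where $\mathcal{D}$ is cartesian. Let $W$ be an object of $\mathcal{D}$ such that the counit of the sliced adjunction $L_W\dashv R_W:\mathcal{D}/W\rightleftarrows\mathcal{C}/LW$ is an isomorphism (so $L_WR_W\cong \mathrm{Id}_{\mathcal{C}/LW}$). Assume that for every object $X_\phi$ (i.e. $\phi:X\to LW$) of $\mathcal{C}/LW$, the unit $\eta^W$ of $L_W\dashv R_W$ is an isomorphism at the object $W^*\Sigma_WR_W(X_\phi)$. Then for any object $V_f$ (i.e. $f:V\to W$) of $\mathcal{D}/W$, $\eta^W_{W^*V}$ is an isomorphism if and only if $\eta^W_{V_f}$ is an isomorphism.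
   Context: Sliced adjunction at an object $W$ of $\mathcal{D}$: $L_W:\mathcal{D}/W\to\mathcal{C}/LW$ sends $g:V\to W$ to $Lg:LV\to LW$, and $R_W:\mathcal{C}/LW\to\mathcal{D}/W$ sends $h:Z\to LW$ to the pullback of $Rh:RZ\to RLW$ along the unit $\eta_W:W\to RLW$ (as an object over $W$). $\eta^W$ denotes the unit of $L_W\dashv R_W$. $\Sigma_W:\mathcal{D}/W\to\mathcal{D}$ is the forgetful functor (taking the domain), and $W^*:\mathcal{D}\to\mathcal{D}/W$ sends $A$ to the projection $\pi_1:W\times A\to W$; thus $W^*V$ is $\pi_1:W\times V\to W$. *)

theory Defs
  imports Main
begin

record ('o,'a) category =
  Ob  :: "'o set"
  Ar  :: "'a set"
  Dom :: "'a \<Rightarrow> 'o"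
  Cod :: "'a \<Rightarrow> 'o"
  Idt :: "'o \<Rightarrow> 'a"
  Cmp :: "'a \<Rightarrow> 'a \<Rightarrow> 'a"   (* Cmp C g f = g \<circ> f *)

definition hom :: "('o,'a) category \<Rightarrow> 'o \<Rightarrow> 'o \<Rightarrow> 'a set" where
  "hom C A B = {f \<in> Ar C. Dom C f = A \<and> Cod C f = B}"

definition is_category :: "('o,'a) category \<Rightarrow> bool" where
  "is_category C \<longleftrightarrow>
     (\<forall>f\<in>Ar C. Dom C f \<in> Ob C \<and> Cod C f \<in> Ob C) \<and>
     (\<forall>A\<in>Ob C. Idt C A \<in> hom C A A) \<and>
     (\<forall>f\<in>Ar C. \<forall>g\<in>Ar C. Cod C f = Dom C g \<longrightarrow> Cmp C g f \<in> hom C (Dom C f) (Cod C g)) \<and>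
     (\<forall>f\<in>Ar C. Cmp C (Idt C (Cod C f)) f = f \<and> Cmp C f (Idt C (Dom C f)) = f) \<and>
     (\<forall>f\<in>Ar C. \<forall>g\<in>Ar C. \<forall>h\<in>Ar C. Cod C f = Dom C g \<longrightarrow> Cod C g = Dom C h \<longrightarrow>
        Cmp C h (Cmp C g f) = Cmp C (Cmp C h g) f)"

definition is_iso :: "('o,'a) category \<Rightarrow> 'a \<Rightarrow> bool" where
  "is_iso C f \<longleftrightarrow> f \<in> Ar C \<and>
     (\<exists>g\<in>hom C (Cod C f) (Dom C f). Cmp C g f = Idt C (Dom C f) \<and> Cmp C f g = Idt C (Cod C f))"

record ('o1,'a1,'o2,'a2) cfunctor =
  FO :: "'o1 \<Rightarrow> 'o2"
  FA :: "'a1 \<Rightarrow> 'a2"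

definition is_functor :: "('o1,'a1) category \<Rightarrow> ('o2,'a2) category \<Rightarrow> ('o1,'a1,'o2,'a2) cfunctor \<Rightarrow> bool" where
  "is_functor C D F \<longleftrightarrow>
     (\<forall>A\<in>Ob C. FO F A \<in> Ob D) \<and>
     (\<forall>A B f. f \<in> hom C A B \<longrightarrow> FA F f \<in> hom D (FO F A) (FO F B)) \<and>
     (\<forall>A\<in>Ob C. FA F (Idt C A) = Idt D (FO F A)) \<and>
     (\<forall>f\<in>Ar C. \<forall>g\<in>Ar C. Cod C f = Dom C g \<longrightarrow> FA F (Cmp C g f) = Cmp D (FA F g) (FA F f))"

definition id_functor :: "('o,'a) category \<Rightarrow> ('o,'a,'o,'a) cfunctor" where
  "id_functor C = \<lparr>FO = (\<lambda>A. A), FA = (\<lambda>f. f)\<rparr>"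

definition fcomp :: "('o2,'a2,'o3,'a3) cfunctor \<Rightarrow> ('o1,'a1,'o2,'a2) cfunctor \<Rightarrow> ('o1,'a1,'o3,'a3) cfunctor" where
  "fcomp G F = \<lparr>FO = (\<lambda>A. FO G (FO F A)), FA = (\<lambda>f. FA G (FA F f))\<rparr>"

definition is_nat_trans :: "('o1,'a1) category \<Rightarrow> ('o2,'a2) category \<Rightarrow>
   ('o1,'a1,'o2,'a2) cfunctor \<Rightarrow> ('o1,'a1,'o2,'a2) cfunctor \<Rightarrow> ('o1 \<Rightarrow> 'a2) \<Rightarrow> bool" where
  "is_nat_trans C D F G \<tau> \<longleftrightarrow>
     (\<forall>A\<in>Ob C. \<tau> A \<in> hom D (FO F A) (FO G A)) \<and>
     (\<forall>f\<in>Ar C. Cmp D (\<tau> (Cod C f)) (FA F f) = Cmp D (FA G f) (\<tau> (Dom C f)))"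

definition is_adjunction :: "('d,'e) category \<Rightarrow> ('c,'f) category \<Rightarrow>
   ('d,'e,'c,'f) cfunctor \<Rightarrow> ('c,'f,'d,'e) cfunctor \<Rightarrow> ('d \<Rightarrow> 'e) \<Rightarrow> ('c \<Rightarrow> 'f) \<Rightarrow> bool" where
  "is_adjunction D C L R \<eta> \<epsilon> \<longleftrightarrow>
     is_functor D C L \<and> is_functor C D R \<and>
     is_nat_trans D D (id_functor D) (fcomp R L) \<eta> \<and>
     is_nat_trans C C (fcomp L R) (id_functor C) \<epsilon> \<and>
     (\<forall>A\<in>Ob D. Cmp C (\<epsilon> (FO L A)) (FA L (\<eta> A)) = Idt C (FO L A)) \<and>
     (\<forall>X\<in>Ob C. Cmp D (FA R (\<epsilon> X)) (\<eta> (FO R X)) = Idt D (FO R X))"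

definition is_terminal :: "('o,'a) category \<Rightarrow> 'o \<Rightarrow> bool" where
  "is_terminal C T \<longleftrightarrow> T \<in> Ob C \<and> (\<forall>A\<in>Ob C. \<exists>!u. u \<in> hom C A T)"

definition is_product :: "('o,'a) category \<Rightarrow> 'o \<Rightarrow> 'o \<Rightarrow> 'o \<Rightarrow> 'a \<Rightarrow> 'a \<Rightarrow> bool" where
  "is_product C A B P p1 p2 \<longleftrightarrow> p1 \<in> hom C P A \<and> p2 \<in> hom C P B \<and>
     (\<forall>Q q1 q2. q1 \<in> hom C Q A \<longrightarrow> q2 \<in> hom C Q B \<longrightarrow>
        (\<exists>!u. u \<in> hom C Q P \<and> Cmp C p1 u = q1 \<and> Cmp C p2 u = q2))"

definition cartesian :: "('o,'a) category \<Rightarrow> bool" where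
  "cartesian C \<longleftrightarrow> (\<exists>T. is_terminal C T) \<and>
     (\<forall>A\<in>Ob C. \<forall>B\<in>Ob C. \<exists>P p1 p2. is_product C A B P p1 p2)"

definition is_pullback :: "('o,'a) category \<Rightarrow> 'a \<Rightarrow> 'a \<Rightarrow> 'o \<Rightarrow> 'a \<Rightarrow> 'a \<Rightarrow> bool" where
  "is_pullback C f g P p q \<longleftrightarrow> f \<in> Ar C \<and> g \<in> Ar C \<and> Cod C f = Cod C g \<and>
     p \<in> hom C P (Dom C f) \<and> q \<in> hom C P (Dom C g) \<and> Cmp C f p = Cmp C g q \<and>
     (\<forall>Q x y. x \<in> hom C Q (Dom C f) \<longrightarrow> y \<in> hom C Q (Dom C g) \<longrightarrow> Cmp C f x = Cmp C g y \<longrightarrow>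
        (\<exists>!u. u \<in> hom C Q P \<and> Cmp C p u = x \<and> Cmp C q u = y))"

section \<open>Slices. Objects of D/W are arrows of D with codomain W.\<close>

text \<open>W^* V : the projection pi_1 : W x V -> W (for a chosen product).\<close>
definition base_change :: "('o,'a) category \<Rightarrow> 'o \<Rightarrow> 'o \<Rightarrow> 'a" where
  "base_change D W V = fst (snd (SOME (P, p1, p2). is_product D W V P p1 p2))"

definition sl_pb :: "('d,'e) category \<Rightarrow> ('c,'f,'d,'e) cfunctor \<Rightarrow> ('d \<Rightarrow> 'e) \<Rightarrow> 'd \<Rightarrow> 'f \<Rightarrow> 'd \<times> 'e \<times> 'e" where
  "sl_pb D R \<eta> W h = (SOME (P, p1, p2). is_pullback D (\<eta> W) (FA R h) P p1 p2)"

text \<open>R_W h, as an object of D/W (the arrow P -> W).\<close>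
definition sl_R :: "('d,'e) category \<Rightarrow> ('c,'f,'d,'e) cfunctor \<Rightarrow> ('d \<Rightarrow> 'e) \<Rightarrow> 'd \<Rightarrow> 'f \<Rightarrow> 'e" where
  "sl_R D R \<eta> W h = fst (snd (sl_pb D R \<eta> W h))"

text \<open>Unit of L_W -| R_W at g : A -> W: the map A -> P induced by (g, eta_A) into the
  pullback R_W(L g).  Its underlying arrow in D.\<close>
definition sl_unit :: "('d,'e) category \<Rightarrow> ('d,'e,'c,'f) cfunctor \<Rightarrow> ('c,'f,'d,'e) cfunctor \<Rightarrow>
     ('d \<Rightarrow> 'e) \<Rightarrow> 'd \<Rightarrow> 'e \<Rightarrow> 'e" where
  "sl_unit D L R \<eta> W g = (case sl_pb D R \<eta> W (FA L g) of (P, p1, p2) \<Rightarrow>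
     THE u. u \<in> hom D (Dom D g) P \<and> Cmp D p1 u = g \<and> Cmp D p2 u = \<eta> (Dom D g))"

text \<open>Counit of L_W -| R_W at h : Z -> LW: eps_Z o L(p2) : L P -> Z (underlying arrow in C).\<close>
definition sl_counit :: "('d,'e) category \<Rightarrow> ('c,'f) category \<Rightarrow> ('d,'e,'c,'f) cfunctor \<Rightarrow>
     ('c,'f,'d,'e) cfunctor \<Rightarrow> ('d \<Rightarrow> 'e) \<Rightarrow> ('c \<Rightarrow> 'f) \<Rightarrow> 'd \<Rightarrow> 'f \<Rightarrow> 'f" where
  "sl_counit D C L R \<eta> \<epsilon> W h = (case sl_pb D R \<eta> W h of (P, p1, p2) \<Rightarrow>
     Cmp C (\<epsilon> (Dom C h)) (FA L p2))"

end

theory Submission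
  imports Defs
begin


context fixes C :: "('o,'a) category" assumes cat: "is_category C"
begin

lemma ob_dom: "f \<in> hom C A B \<Longrightarrow> A \<in> Ob C"
  using cat unfolding is_category_def hom_def by auto
lemma ob_cod: "f \<in> hom C A B \<Longrightarrow> B \<in> Ob C"
  using cat unfolding is_category_def hom_def by auto
lemma comp_hom: "f \<in> hom C A B \<Longrightarrow> g \<in> hom C B B' \<Longrightarrow> Cmp C g f \<in> hom C A B'"
  using cat unfolding is_category_def hom_def by auto
lemma id_hom: "A \<in> Ob C \<Longrightarrow> Idt C A \<in> hom C A A"
  using cat unfolding is_category_def by auto
lemma id_l: "f \<in> hom C A B \<Longrightarrow> Cmp C (Idt C B) f = f"
  using cat unfolding is_category_def hom_def by auto
lemma id_r: "f \<in> hom C A B \<Longrightarrow> Cmp C f (Idt C A) = f"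
  using cat unfolding is_category_def hom_def by auto
lemma assoc: "f \<in> hom C A B \<Longrightarrow> g \<in> hom C B B' \<Longrightarrow> h \<in> hom C B' B'' \<Longrightarrow>
   Cmp C h (Cmp C g f) = Cmp C (Cmp C h g) f"
  using cat unfolding is_category_def hom_def by auto
lemma isoE: "is_iso C f \<Longrightarrow> f \<in> hom C A B \<Longrightarrow>
   \<exists>g\<in>hom C B A. Cmp C g f = Idt C A \<and> Cmp C f g = Idt C B"
  unfolding is_iso_def hom_def by auto
lemma isoI: "f \<in> hom C A B \<Longrightarrow> g \<in> hom C B A \<Longrightarrow> Cmp C g f = Idt C A \<Longrightarrow>
   Cmp C f g = Idt C B \<Longrightarrow> is_iso C f"
  unfolding is_iso_def hom_def by auto

lemma pb_homs:
  assumes "is_pullback C a b P p1 p2"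
  shows "a \<in> hom C (Dom C a) (Cod C a)" "b \<in> hom C (Dom C b) (Cod C a)"
    "p1 \<in> hom C P (Dom C a)" "p2 \<in> hom C P (Dom C b)" "Cmp C a p1 = Cmp C b p2"
  using assms unfolding is_pullback_def hom_def by auto

lemma pb_ex1:
  assumes "is_pullback C a b P p1 p2" "x \<in> hom C Q (Dom C a)" "y \<in> hom C Q (Dom C b)"
    "Cmp C a x = Cmp C b y"
  shows "\<exists>u\<in>hom C Q P. Cmp C p1 u = x \<and> Cmp C p2 u = y"
  using assms unfolding is_pullback_def by blast

lemma pb_uniq:
  assumes pb: "is_pullback C a b P p1 p2" and u: "u \<in> hom C Q P" and u': "u' \<in> hom C Q P"
    and e1: "Cmp C p1 u = Cmp C p1 u'" and e2: "Cmp C p2 u = Cmp C p2 u'"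
  shows "u = u'"
proof -
  note h = pb_homs[OF pb]
  have x: "Cmp C p1 u \<in> hom C Q (Dom C a)" using comp_hom[OF u h(3)] .
  have y: "Cmp C p2 u \<in> hom C Q (Dom C b)" using comp_hom[OF u h(4)] .
  have "Cmp C a (Cmp C p1 u) = Cmp C (Cmp C a p1) u" using assoc[OF u h(3) h(1)] .
  also have "\<dots> = Cmp C (Cmp C b p2) u" using h(5) by simp
  also have "\<dots> = Cmp C b (Cmp C p2 u)" using assoc[OF u h(4) h(2)] by simp
  finally have eq: "Cmp C a (Cmp C p1 u) = Cmp C b (Cmp C p2 u)" .
  have "\<exists>!v. v \<in> hom C Q P \<and> Cmp C p1 v = Cmp C p1 u \<and> Cmp C p2 v = Cmp C p2 u"
    using pb x y eq unfolding is_pullback_def by blast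
  then show ?thesis using u u' e1 e2 by metis
qed

lemma pb_iso_iff:
  assumes pb: "is_pullback C a b P p1 p2" and x: "x \<in> hom C A (Dom C a)"
    and y: "y \<in> hom C A (Dom C b)" and eq: "Cmp C a x = Cmp C b y"
    and u: "u \<in> hom C A P" and ux: "Cmp C p1 u = x" and uy: "Cmp C p2 u = y"
  shows "is_iso C u \<longleftrightarrow> is_pullback C a b A x y"
proof
  note h = pb_homs[OF pb]
  assume "is_iso C u"
  then obtain v where v: "v \<in> hom C P A" and vu: "Cmp C v u = Idt C A"
    and uv: "Cmp C u v = Idt C P" using isoE u by blast
  have A: "A \<in> Ob C" using ob_dom[OF u] .
  have xv: "Cmp C x v = p1"
    by (metis ux assoc[OF v u h(3)] uv id_r h(3))
  have yv: "Cmp C y v = p2"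
    by (metis uy assoc[OF v u h(4)] uv id_r h(4))
  show "is_pullback C a b A x y"
    unfolding is_pullback_def
  proof (intro conjI allI impI)
    show "a \<in> Ar C" "b \<in> Ar C" "Cod C a = Cod C b" using pb unfolding is_pullback_def by auto
    show "x \<in> hom C A (Dom C a)" "y \<in> hom C A (Dom C b)" "Cmp C a x = Cmp C b y"
      using x y eq by auto
    fix Q x' y' assume x': "x' \<in> hom C Q (Dom C a)" and y': "y' \<in> hom C Q (Dom C b)"
      and e': "Cmp C a x' = Cmp C b y'"
    obtain w where w: "w \<in> hom C Q P" "Cmp C p1 w = x'" "Cmp C p2 w = y'"
      using pb_ex1[OF pb x' y' e'] by blast
    show "\<exists>!u. u \<in> hom C Q A \<and> Cmp C x u = x' \<and> Cmp C y u = y'"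
    proof (rule ex1I[of _ "Cmp C v w"])
      show "Cmp C v w \<in> hom C Q A \<and> Cmp C x (Cmp C v w) = x' \<and> Cmp C y (Cmp C v w) = y'"
        using comp_hom[OF w(1) v] assoc[OF w(1) v x] assoc[OF w(1) v y] xv yv w by simp
      fix w' assume w': "w' \<in> hom C Q A \<and> Cmp C x w' = x' \<and> Cmp C y w' = y'"
      have uw': "Cmp C u w' \<in> hom C Q P" using comp_hom[OF _ u] w' by blast
      have "Cmp C p1 (Cmp C u w') = x'" using assoc[OF _ u h(3)] w' ux by metis
      moreover have "Cmp C p2 (Cmp C u w') = y'" using assoc[OF _ u h(4)] w' uy by metis
      ultimately have "Cmp C u w' = w" using pb_uniq[OF pb uw' w(1)] w by simp
      then have "Cmp C v (Cmp C u w') = Cmp C v w" by simp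
      then show "w' = Cmp C v w" using assoc[OF _ u v] vu id_l w' by metis
    qed
  qed
next
  note h = pb_homs[OF pb]
  assume pbA: "is_pullback C a b A x y"
  obtain v where v: "v \<in> hom C P A" "Cmp C x v = p1" "Cmp C y v = p2"
    using pb_ex1[OF pbA h(3) h(4) h(5)] by blast
  have A: "A \<in> Ob C" using ob_dom[OF u] .
  have P: "P \<in> Ob C" using ob_dom[OF v(1)] .
  have vu: "Cmp C v u = Idt C A"
  proof (rule pb_uniq[OF pbA comp_hom[OF u v(1)] id_hom[OF A]])
    show "Cmp C x (Cmp C v u) = Cmp C x (Idt C A)"
      using assoc[OF u v(1) x] v ux id_r[OF x] by simp
    show "Cmp C y (Cmp C v u) = Cmp C y (Idt C A)"
      using assoc[OF u v(1) y] v uy id_r[OF y] by simp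
  qed
  have uv: "Cmp C u v = Idt C P"
  proof (rule pb_uniq[OF pb comp_hom[OF v(1) u] id_hom[OF P]])
    show "Cmp C p1 (Cmp C u v) = Cmp C p1 (Idt C P)"
      using assoc[OF v(1) u h(3)] v ux id_r[OF h(3)] by simp
    show "Cmp C p2 (Cmp C u v) = Cmp C p2 (Idt C P)"
      using assoc[OF v(1) u h(4)] v uy id_r[OF h(4)] by simp
  qed
  show "is_iso C u" using isoI[OF u v(1) vu uv] .
qed

lemma prod_ex1:
  assumes "is_product C A B P p1 p2" "q1 \<in> hom C Q A" "q2 \<in> hom C Q B"
  shows "\<exists>u\<in>hom C Q P. Cmp C p1 u = q1 \<and> Cmp C p2 u = q2"
  using assms unfolding is_product_def by blast

lemma prod_uniq:
  assumes pr: "is_product C A B P p1 p2" and u: "u \<in> hom C Q P" and u': "u' \<in> hom C Q P"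
    and e1: "Cmp C p1 u = Cmp C p1 u'" and e2: "Cmp C p2 u = Cmp C p2 u'"
  shows "u = u'"
proof -
  have h: "p1 \<in> hom C P A" "p2 \<in> hom C P B" using pr unfolding is_product_def by auto
  have "\<exists>!v. v \<in> hom C Q P \<and> Cmp C p1 v = Cmp C p1 u \<and> Cmp C p2 v = Cmp C p2 u"
    using pr comp_hom[OF u h(1)] comp_hom[OF u h(2)] unfolding is_product_def by blast
  then show ?thesis using u u' e1 e2 by metis
qed

lemma prod_iso:
  assumes p: "is_product C W V P p1 p2" and q: "is_product C W V' P' q1 q2"
    and m: "m \<in> hom C V V'" and mi: "is_iso C m"
  shows "\<exists>k\<in>hom C P P'. is_iso C k \<and> Cmp C q1 k = p1"
proof -
  have hp: "p1 \<in> hom C P W" "p2 \<in> hom C P V" using p unfolding is_product_def by auto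
  have hq: "q1 \<in> hom C P' W" "q2 \<in> hom C P' V'" using q unfolding is_product_def by auto
  obtain n where n: "n \<in> hom C V' V" "Cmp C n m = Idt C V" "Cmp C m n = Idt C V'"
    using isoE[OF mi m] by blast
  obtain k where k: "k \<in> hom C P P'" "Cmp C q1 k = p1" "Cmp C q2 k = Cmp C m p2"
    using prod_ex1[OF q hp(1) comp_hom[OF hp(2) m]] by blast
  obtain k' where k': "k' \<in> hom C P' P" "Cmp C p1 k' = q1" "Cmp C p2 k' = Cmp C n q2"
    using prod_ex1[OF p hq(1) comp_hom[OF hq(2) n(1)]] by blast
  have P: "P \<in> Ob C" using ob_dom[OF hp(1)] .
  have P': "P' \<in> Ob C" using ob_dom[OF hq(1)] .
  have "Cmp C k' k = Idt C P"
  proof (rule prod_uniq[OF p comp_hom[OF k(1) k'(1)] id_hom[OF P]])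
    show "Cmp C p1 (Cmp C k' k) = Cmp C p1 (Idt C P)"
      using assoc[OF k(1) k'(1) hp(1)] k k' id_r[OF hp(1)] by simp
    have "Cmp C p2 (Cmp C k' k) = Cmp C (Cmp C n q2) k"
      using assoc[OF k(1) k'(1) hp(2)] k' by simp
    also have "\<dots> = Cmp C n (Cmp C m p2)" using assoc[OF k(1) hq(2) n(1)] k by simp
    also have "\<dots> = p2" using assoc[OF hp(2) m n(1)] n id_l[OF hp(2)] by simp
    finally show "Cmp C p2 (Cmp C k' k) = Cmp C p2 (Idt C P)" using id_r[OF hp(2)] by simp
  qed
  moreover have "Cmp C k k' = Idt C P'"
  proof (rule prod_uniq[OF q comp_hom[OF k'(1) k(1)] id_hom[OF P']])
    show "Cmp C q1 (Cmp C k k') = Cmp C q1 (Idt C P')"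
      using assoc[OF k'(1) k(1) hq(1)] k k' id_r[OF hq(1)] by simp
    have "Cmp C q2 (Cmp C k k') = Cmp C (Cmp C m p2) k'"
      using assoc[OF k'(1) k(1) hq(2)] k by simp
    also have "\<dots> = Cmp C m (Cmp C n q2)" using assoc[OF k'(1) hp(2) m] k' by simp
    also have "\<dots> = q2" using assoc[OF hq(2) n(1) m] n id_l[OF hq(2)] by simp
    finally show "Cmp C q2 (Cmp C k k') = Cmp C q2 (Idt C P')" using id_r[OF hq(2)] by simp
  qed
  ultimately show ?thesis using isoI[OF k(1) k'(1)] k by blast
qed

end

lemma functor_hom: "is_functor C D F \<Longrightarrow> f \<in> hom C A B \<Longrightarrow> FA F f \<in> hom D (FO F A) (FO F B)"
  unfolding is_functor_def by blast
lemma functor_comp: "is_functor C D F \<Longrightarrow> f \<in> hom C A B \<Longrightarrow> g \<in> hom C B B' \<Longrightarrow>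
   FA F (Cmp C g f) = Cmp D (FA F g) (FA F f)"
  unfolding is_functor_def hom_def by auto
lemma functor_id: "is_functor C D F \<Longrightarrow> A \<in> Ob C \<Longrightarrow> FA F (Idt C A) = Idt D (FO F A)"
  unfolding is_functor_def by auto
lemma functor_iso:
  assumes "is_category C" "is_functor C D F" "is_iso C k" "k \<in> hom C A B" "is_category D"
  shows "is_iso D (FA F k)"
proof -
  obtain g where g: "g \<in> hom C B A" "Cmp C g k = Idt C A" "Cmp C k g = Idt C B"
    using isoE[OF assms(1) assms(3,4)] by blast
  show ?thesis
    using isoI[OF assms(5) functor_hom[OF assms(2,4)] functor_hom[OF assms(2) g(1)]]
      functor_comp[OF assms(2) assms(4) g(1)] functor_comp[OF assms(2) g(1) assms(4)]
      g functor_id[OF assms(2)] ob_dom[OF assms(1) assms(4)] ob_cod[OF assms(1) assms(4)]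
    by simp
qed



locale sl =
  fixes D :: "('d,'e) category" and C :: "('c,'f) category"
    and L :: "('d,'e,'c,'f) cfunctor" and R :: "('c,'f,'d,'e) cfunctor"
    and \<eta> :: "'d \<Rightarrow> 'e" and \<epsilon> :: "'c \<Rightarrow> 'f" and W :: 'd
  assumes catD: "is_category D" and catC: "is_category C"
    and adj: "is_adjunction D C L R \<eta> \<epsilon>" and W: "W \<in> Ob D"
    and pb_ex: "\<forall>Z. \<forall>h\<in>hom C Z (FO L W). \<exists>P p1 p2. is_pullback D (\<eta> W) (FA R h) P p1 p2"
begin

abbreviation RL where "RL k \<equiv> FA R (FA L k)"
abbreviation T where "T A \<equiv> FO R (FO L A)"

lemma FL: "is_functor D C L" using adj unfolding is_adjunction_def by auto
lemma FR: "is_functor C D R" using adj unfolding is_adjunction_def by auto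

lemma eta_hom: "A \<in> Ob D \<Longrightarrow> \<eta> A \<in> hom D A (T A)"
  using adj unfolding is_adjunction_def is_nat_trans_def id_functor_def fcomp_def by auto

lemma eta_nat: "k \<in> hom D A B \<Longrightarrow> Cmp D (\<eta> B) k = Cmp D (RL k) (\<eta> A)"
  using adj unfolding is_adjunction_def is_nat_trans_def id_functor_def fcomp_def hom_def by auto

lemma RL_hom: "k \<in> hom D A B \<Longrightarrow> RL k \<in> hom D (T A) (T B)"
  using functor_hom[OF FR functor_hom[OF FL]] .

lemma RL_comp: "k \<in> hom D A B \<Longrightarrow> l \<in> hom D B B' \<Longrightarrow> RL (Cmp D l k) = Cmp D (RL l) (RL k)"
  using functor_comp[OF FL] functor_comp[OF FR] functor_hom[OF FL] by metis

lemma RL_iso: "k \<in> hom D A B \<Longrightarrow> is_iso D k \<Longrightarrow> is_iso D (RL k)"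
  using functor_iso[OF catC FR _ functor_hom[OF FL] catD] functor_iso[OF catD FL _ _ catC] by blast

definition Good where
  "Good g \<longleftrightarrow> is_pullback D (\<eta> W) (RL g) (Dom D g) g (\<eta> (Dom D g))"

lemma slpb:
  assumes "h \<in> hom C Z (FO L W)" "sl_pb D R \<eta> W h = (P, p1, p2)"
  shows "is_pullback D (\<eta> W) (FA R h) P p1 p2"
proof -
  have "\<exists>t. case t of (P, p1, p2) \<Rightarrow> is_pullback D (\<eta> W) (FA R h) P p1 p2"
    using pb_ex assms(1) by blast
  from someI_ex[OF this] show ?thesis using assms(2) unfolding sl_pb_def by simp
qed

lemma sl_unit_iff:
  assumes g: "g \<in> hom D A W"
  shows "is_iso D (sl_unit D L R \<eta> W g) \<longleftrightarrow> Good g"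
proof -
  obtain P p1 p2 where sp: "sl_pb D R \<eta> W (FA L g) = (P, p1, p2)" by (metis prod_cases3)
  have pb: "is_pullback D (\<eta> W) (RL g) P p1 p2" using slpb[OF functor_hom[OF FL g] sp] .
  have A: "A \<in> Ob D" using ob_dom[OF catD g] .
  have x: "g \<in> hom D A (Dom D (\<eta> W))" using g eta_hom[OF W] by (simp add: hom_def)
  have y: "\<eta> A \<in> hom D A (Dom D (RL g))" using eta_hom[OF A] RL_hom[OF g] by (simp add: hom_def)
  have eq: "Cmp D (\<eta> W) g = Cmp D (RL g) (\<eta> A)" using eta_nat[OF g] .
  have ex: "\<exists>!u. u \<in> hom D A P \<and> Cmp D p1 u = g \<and> Cmp D p2 u = \<eta> A"
    using pb x y eq unfolding is_pullback_def by blast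
  have su: "sl_unit D L R \<eta> W g = (THE u. u \<in> hom D A P \<and> Cmp D p1 u = g \<and> Cmp D p2 u = \<eta> A)"
    unfolding sl_unit_def sp using g by (simp add: hom_def)
  have u: "sl_unit D L R \<eta> W g \<in> hom D A P \<and> Cmp D p1 (sl_unit D L R \<eta> W g) = g
      \<and> Cmp D p2 (sl_unit D L R \<eta> W g) = \<eta> A"
    unfolding su using theI'[OF ex] .
  have dg: "Dom D g = A" using g by (simp add: hom_def)
  show ?thesis using pb_iso_iff[OF catD pb x y eq] u unfolding Good_def dg by blast
qed

lemma Good_iso:
  assumes g: "g \<in> hom D A W" and G: "Good g" and k: "k \<in> hom D B A" and ki: "is_iso D k"
  shows "Good (Cmp D g k)"
proof -
  have A: "A \<in> Ob D" using ob_dom[OF catD g] .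
  have B: "B \<in> Ob D" using ob_dom[OF catD k] .
  have dg: "Dom D g = A" using g by (simp add: hom_def)
  have gk: "Cmp D g k \<in> hom D B W" using comp_hom[OF catD k g] .
  have dgk: "Dom D (Cmp D g k) = B" using gk by (simp add: hom_def)
  have pbA: "is_pullback D (\<eta> W) (RL g) A g (\<eta> A)" using G unfolding Good_def dg .
  obtain k' where k': "k' \<in> hom D A B" "Cmp D k' k = Idt D B" "Cmp D k k' = Idt D A"
    using isoE[OF catD ki k] by blast
  have eW: "\<eta> W \<in> hom D W (T W)" using eta_hom[OF W] .
  have RLg: "RL g \<in> hom D (T A) (T W)" using RL_hom[OF g] .
  have RLk: "RL k \<in> hom D (T B) (T A)" using RL_hom[OF k] .
  have RLgk: "RL (Cmp D g k) = Cmp D (RL g) (RL k)" using RL_comp[OF k g] .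
  obtain rk' where rk': "rk' \<in> hom D (T A) (T B)" "Cmp D rk' (RL k) = Idt D (T B)"
    "Cmp D (RL k) rk' = Idt D (T A)"
    using isoE[OF catD RL_iso[OF k ki] RLk] by blast
  have eA: "\<eta> A \<in> hom D A (T A)" using eta_hom[OF A] .
  have eB: "\<eta> B \<in> hom D B (T B)" using eta_hom[OF B] .
  have natk: "Cmp D (\<eta> A) k = Cmp D (RL k) (\<eta> B)" using eta_nat[OF k] .
  show ?thesis unfolding Good_def dgk is_pullback_def
  proof (intro conjI allI impI)
    show "\<eta> W \<in> Ar D" "RL (Cmp D g k) \<in> Ar D" "Cod D (\<eta> W) = Cod D (RL (Cmp D g k))"
      using eW RL_hom[OF gk] by (auto simp: hom_def)
    show "Cmp D g k \<in> hom D B (Dom D (\<eta> W))" using gk eW by (simp add: hom_def)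
    show "\<eta> B \<in> hom D B (Dom D (RL (Cmp D g k)))" using eB RL_hom[OF gk] by (simp add: hom_def)
    show "Cmp D (\<eta> W) (Cmp D g k) = Cmp D (RL (Cmp D g k)) (\<eta> B)" using eta_nat[OF gk] .
    fix Q x y assume x: "x \<in> hom D Q (Dom D (\<eta> W))" and y: "y \<in> hom D Q (Dom D (RL (Cmp D g k)))"
      and e: "Cmp D (\<eta> W) x = Cmp D (RL (Cmp D g k)) y"
    have x: "x \<in> hom D Q W" using x eW by (simp add: hom_def)
    have y: "y \<in> hom D Q (T B)" using y RL_hom[OF gk] by (simp add: hom_def)
    have y2: "Cmp D (RL k) y \<in> hom D Q (T A)" using comp_hom[OF catD y RLk] .
    have e2: "Cmp D (\<eta> W) x = Cmp D (RL g) (Cmp D (RL k) y)"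
      using e RLgk assoc[OF catD y RLk RLg] by simp
    obtain w where w: "w \<in> hom D Q A" "Cmp D g w = x" "Cmp D (\<eta> A) w = Cmp D (RL k) y"
      using pb_ex1[OF catD pbA] x y2 e2 eW RLg by (fastforce simp: hom_def)
    show "\<exists>!u. u \<in> hom D Q B \<and> Cmp D (Cmp D g k) u = x \<and> Cmp D (\<eta> B) u = y"
    proof (rule ex1I[of _ "Cmp D k' w"])
      have kw: "Cmp D k' w \<in> hom D Q B" using comp_hom[OF catD w(1) k'(1)] .
      have gkk: "Cmp D (Cmp D g k) (Cmp D k' w) = x"
        using assoc[OF catD w(1) k'(1) k] k'(3) id_l[OF catD w(1)] assoc[OF catD _ k g] kw w(2)
        by metis
      have "Cmp D (RL k) (Cmp D (\<eta> B) (Cmp D k' w)) = Cmp D (Cmp D (RL k) (\<eta> B)) (Cmp D k' w)"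
        using assoc[OF catD kw eB RLk] .
      also have "\<dots> = Cmp D (Cmp D (\<eta> A) k) (Cmp D k' w)" using natk by simp
      also have "\<dots> = Cmp D (\<eta> A) (Cmp D k (Cmp D k' w))" using assoc[OF catD kw k eA] by simp
      also have "\<dots> = Cmp D (\<eta> A) w"
        using assoc[OF catD w(1) k'(1) k] k'(3) id_l[OF catD w(1)] by simp
      finally have "Cmp D (RL k) (Cmp D (\<eta> B) (Cmp D k' w)) = Cmp D (RL k) y" using w(3) by simp
      then have "Cmp D rk' (Cmp D (RL k) (Cmp D (\<eta> B) (Cmp D k' w))) = Cmp D rk' (Cmp D (RL k) y)"
        by simp
      then have "Cmp D (\<eta> B) (Cmp D k' w) = y"
        using assoc[OF catD comp_hom[OF catD kw eB] RLk rk'(1)] assoc[OF catD y RLk rk'(1)]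
          rk'(2) id_l[OF catD y] id_l[OF catD comp_hom[OF catD kw eB]] by simp
      then show "Cmp D k' w \<in> hom D Q B \<and> Cmp D (Cmp D g k) (Cmp D k' w) = x \<and> Cmp D (\<eta> B) (Cmp D k' w) = y"
        using kw gkk by simp
      fix w' assume w': "w' \<in> hom D Q B \<and> Cmp D (Cmp D g k) w' = x \<and> Cmp D (\<eta> B) w' = y"
      have kw': "Cmp D k w' \<in> hom D Q A" using comp_hom[OF catD _ k] w' by blast
      have "Cmp D g (Cmp D k w') = x" using assoc[OF catD _ k g] w' by metis
      moreover have "Cmp D (\<eta> A) (Cmp D k w') = Cmp D (RL k) y"
        using assoc[OF catD _ k eA] assoc[OF catD _ eB RLk] natk w' by metis
      ultimately have "Cmp D k w' = w" using pb_uniq[OF catD pbA kw' w(1)] w by simp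
      then have "Cmp D k' (Cmp D k w') = Cmp D k' w" by simp
      then show "w' = Cmp D k' w" using assoc[OF catD _ k k'(1)] k'(2) id_l[OF catD] w' by metis
    qed
  qed
qed

lemma Good_prod:
  assumes p: "is_product D W V P p1 p2" and q: "is_product D W V' P' q1 q2"
    and m: "m \<in> hom D V V'" and mi: "is_iso D m" and G: "Good q1"
  shows "Good p1"
proof -
  obtain k where k: "k \<in> hom D P P'" "is_iso D k" "Cmp D q1 k = p1"
    using prod_iso[OF catD p q m mi] by blast
  have "q1 \<in> hom D P' W" using q unfolding is_product_def by auto
  then show ?thesis using Good_iso[OF _ G k(1,2)] k(3) by simp
qed

end


context sl begin

lemma core:
  assumes pE: "is_product D W V E \<pi>1 \<pi>2" and pM: "is_product D W W M \<rho>1 \<rho>2"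
    and GE: "Good \<pi>1" and GM: "Good \<rho>1" and f: "f \<in> hom D V W"
  shows "Good f"
proof -
  have Vo: "V \<in> Ob D" using ob_dom[OF catD f] .
  have hE: "\<pi>1 \<in> hom D E W" "\<pi>2 \<in> hom D E V" using pE unfolding is_product_def by auto
  have hM: "\<rho>1 \<in> hom D M W" "\<rho>2 \<in> hom D M W" using pM unfolding is_product_def by auto
  have Eo: "E \<in> Ob D" using ob_dom[OF catD hE(1)] .
  have Mo: "M \<in> Ob D" using ob_dom[OF catD hM(1)] .
  have pbE: "is_pullback D (\<eta> W) (RL \<pi>1) E \<pi>1 (\<eta> E)"
    using GE hE unfolding Good_def by (simp add: hom_def)
  have pbM: "is_pullback D (\<eta> W) (RL \<rho>1) M \<rho>1 (\<eta> M)"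
    using GM hM unfolding Good_def by (simp add: hom_def)
  obtain s where s: "s \<in> hom D V E" "Cmp D \<pi>1 s = f" "Cmp D \<pi>2 s = Idt D V"
    using prod_ex1[OF catD pE f id_hom[OF catD Vo]] by blast
  obtain t where t: "t \<in> hom D E M" "Cmp D \<rho>1 t = \<pi>1" "Cmp D \<rho>2 t = Cmp D f \<pi>2"
    using prod_ex1[OF catD pM hE(1) comp_hom[OF catD hE(2) f]] by blast
  obtain \<Delta> where d: "\<Delta> \<in> hom D W M" "Cmp D \<rho>1 \<Delta> = Idt D W" "Cmp D \<rho>2 \<Delta> = Idt D W"
    using prod_ex1[OF catD pM id_hom[OF catD W] id_hom[OF catD W]] by blast
  have ts: "Cmp D t s = Cmp D \<Delta> f"
  proof (rule prod_uniq[OF catD pM comp_hom[OF catD s(1) t(1)] comp_hom[OF catD f d(1)]])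
    show "Cmp D \<rho>1 (Cmp D t s) = Cmp D \<rho>1 (Cmp D \<Delta> f)"
      using assoc[OF catD s(1) t(1) hM(1)] assoc[OF catD f d(1) hM(1)] t s d id_l[OF catD f] by simp
    show "Cmp D \<rho>2 (Cmp D t s) = Cmp D \<rho>2 (Cmp D \<Delta> f)"
      using assoc[OF catD s(1) t(1) hM(2)] assoc[OF catD f d(1) hM(2)] t s d id_l[OF catD f]
        assoc[OF catD s(1) hE(2) f] id_r[OF catD f] by simp
  qed
  have eW: "\<eta> W \<in> hom D W (T W)" using eta_hom[OF W] .
  have eV: "\<eta> V \<in> hom D V (T V)" using eta_hom[OF Vo] .
  have eE: "\<eta> E \<in> hom D E (T E)" using eta_hom[OF Eo] .
  have eM: "\<eta> M \<in> hom D M (T M)" using eta_hom[OF Mo] .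
  have RLf: "RL f \<in> hom D (T V) (T W)" using RL_hom[OF f] .
  have RLs: "RL s \<in> hom D (T V) (T E)" using RL_hom[OF s(1)] .
  have RLt: "RL t \<in> hom D (T E) (T M)" using RL_hom[OF t(1)] .
  have RLd: "RL \<Delta> \<in> hom D (T W) (T M)" using RL_hom[OF d(1)] .
  have RLp1: "RL \<pi>1 \<in> hom D (T E) (T W)" using RL_hom[OF hE(1)] .
  have RLp2: "RL \<pi>2 \<in> hom D (T E) (T V)" using RL_hom[OF hE(2)] .
  have RLr1: "RL \<rho>1 \<in> hom D (T M) (T W)" using RL_hom[OF hM(1)] .
  have RLps: "Cmp D (RL \<pi>1) (RL s) = RL f" using RL_comp[OF s(1) hE(1)] s by simp
  have RLp2s: "Cmp D (RL \<pi>2) (RL s) = Idt D (T V)"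
  proof -
    have "FO L V \<in> Ob C" using ob_dom[OF catC functor_hom[OF FL id_hom[OF catD Vo]]] .
    then show ?thesis
      using RL_comp[OF s(1) hE(2)] s functor_id[OF FL Vo] functor_id[OF FR] by simp
  qed
  have RLts: "Cmp D (RL t) (RL s) = Cmp D (RL \<Delta>) (RL f)"
    using RL_comp[OF s(1) t(1)] RL_comp[OF f d(1)] ts by simp
  show ?thesis unfolding Good_def is_pullback_def
  proof (intro conjI allI impI)
    show "\<eta> W \<in> Ar D" "RL f \<in> Ar D" "Cod D (\<eta> W) = Cod D (RL f)"
      using eW RLf by (auto simp: hom_def)
    show "f \<in> hom D (Dom D f) (Dom D (\<eta> W))" using f eW by (simp add: hom_def)
    show "\<eta> (Dom D f) \<in> hom D (Dom D f) (Dom D (RL f))" using eV RLf f by (simp add: hom_def)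
    show "Cmp D (\<eta> W) f = Cmp D (RL f) (\<eta> (Dom D f))" using eta_nat[OF f] f by (simp add: hom_def)
    fix Q x y assume x: "x \<in> hom D Q (Dom D (\<eta> W))" and y: "y \<in> hom D Q (Dom D (RL f))"
      and e: "Cmp D (\<eta> W) x = Cmp D (RL f) y"
    have x: "x \<in> hom D Q W" using x eW by (simp add: hom_def)
    have y: "y \<in> hom D Q (T V)" using y RLf by (simp add: hom_def)
    have dfV: "Dom D f = V" using f by (simp add: hom_def)
    have y2: "Cmp D (RL s) y \<in> hom D Q (T E)" using comp_hom[OF catD y RLs] .
    have e2: "Cmp D (\<eta> W) x = Cmp D (RL \<pi>1) (Cmp D (RL s) y)"
      using e RLps assoc[OF catD y RLs RLp1] by simp
    obtain z where z: "z \<in> hom D Q E" "Cmp D \<pi>1 z = x" "Cmp D (\<eta> E) z = Cmp D (RL s) y"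
      using pb_ex1[OF catD pbE] x y2 e2 eW RLp1 by (fastforce simp: hom_def)
    have tz: "Cmp D t z \<in> hom D Q M" using comp_hom[OF catD z(1) t(1)] .
    have dx: "Cmp D \<Delta> x \<in> hom D Q M" using comp_hom[OF catD x d(1)] .
    have tzdx: "Cmp D t z = Cmp D \<Delta> x"
    proof (rule pb_uniq[OF catD pbM tz dx])
      show "Cmp D \<rho>1 (Cmp D t z) = Cmp D \<rho>1 (Cmp D \<Delta> x)"
        using assoc[OF catD z(1) t(1) hM(1)] assoc[OF catD x d(1) hM(1)] t z d id_l[OF catD x] by simp
      have "Cmp D (\<eta> M) (Cmp D t z) = Cmp D (Cmp D (\<eta> M) t) z" using assoc[OF catD z(1) t(1) eM] .
      also have "\<dots> = Cmp D (Cmp D (RL t) (\<eta> E)) z" using eta_nat[OF t(1)] by simp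
      also have "\<dots> = Cmp D (RL t) (Cmp D (RL s) y)" using assoc[OF catD z(1) eE RLt] z by simp
      also have "\<dots> = Cmp D (Cmp D (RL \<Delta>) (RL f)) y" using assoc[OF catD y RLs RLt] RLts by simp
      also have "\<dots> = Cmp D (RL \<Delta>) (Cmp D (\<eta> W) x)" using assoc[OF catD y RLf RLd] e by simp
      also have "\<dots> = Cmp D (Cmp D (\<eta> M) \<Delta>) x" using assoc[OF catD x eW RLd] eta_nat[OF d(1)] by simp
      also have "\<dots> = Cmp D (\<eta> M) (Cmp D \<Delta> x)" using assoc[OF catD x d(1) eM] by simp
      finally show "Cmp D (\<eta> M) (Cmp D t z) = Cmp D (\<eta> M) (Cmp D \<Delta> x)" .
    qed
    show "\<exists>!u. u \<in> hom D Q (Dom D f) \<and> Cmp D f u = x \<and> Cmp D (\<eta> (Dom D f)) u = y"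
      unfolding dfV
    proof (rule ex1I[of _ "Cmp D \<pi>2 z"])
      have w: "Cmp D \<pi>2 z \<in> hom D Q V" using comp_hom[OF catD z(1) hE(2)] .
      have "Cmp D f (Cmp D \<pi>2 z) = Cmp D \<rho>2 (Cmp D t z)"
        using assoc[OF catD z(1) hE(2) f] assoc[OF catD z(1) t(1) hM(2)] t by simp
      also have "\<dots> = x" using tzdx assoc[OF catD x d(1) hM(2)] d id_l[OF catD x] by simp
      finally have fw: "Cmp D f (Cmp D \<pi>2 z) = x" .
      have "Cmp D (\<eta> V) (Cmp D \<pi>2 z) = Cmp D (Cmp D (RL \<pi>2) (\<eta> E)) z"
        using assoc[OF catD z(1) hE(2) eV] eta_nat[OF hE(2)] by simp
      also have "\<dots> = y" using assoc[OF catD z(1) eE RLp2] z assoc[OF catD y RLs RLp2] RLp2s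
          id_l[OF catD y] by simp
      finally show "Cmp D \<pi>2 z \<in> hom D Q V \<and> Cmp D f (Cmp D \<pi>2 z) = x \<and> Cmp D (\<eta> V) (Cmp D \<pi>2 z) = y"
        using w fw by simp
      fix w' assume w': "w' \<in> hom D Q V \<and> Cmp D f w' = x \<and> Cmp D (\<eta> V) w' = y"
      have sw: "Cmp D s w' \<in> hom D Q E" using comp_hom[OF catD _ s(1)] w' by blast
      have "Cmp D \<pi>1 (Cmp D s w') = x" using assoc[OF catD _ s(1) hE(1)] s w' by metis
      moreover have "Cmp D (\<eta> E) (Cmp D s w') = Cmp D (RL s) y"
        using assoc[OF catD _ s(1) eE] assoc[OF catD _ eV RLs] eta_nat[OF s(1)] w' by metis
      ultimately have "Cmp D s w' = z" using pb_uniq[OF catD pbE sw z(1)] z by simp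
      then have "Cmp D \<pi>2 (Cmp D s w') = Cmp D \<pi>2 z" by simp
      then show "w' = Cmp D \<pi>2 z" using assoc[OF catD _ s(1) hE(2)] s(3) id_l[OF catD] w' by metis
    qed
  qed
qed

end


lemma bc_prod:
  assumes "cartesian D" "W \<in> Ob D" "V \<in> Ob D"
  shows "\<exists>P p2. is_product D W V P (base_change D W V) p2"
proof -
  have "\<exists>t. case t of (P, p1, p2) \<Rightarrow> is_product D W V P p1 p2"
    using assms unfolding cartesian_def by blast
  from someI_ex[OF this] show ?thesis unfolding base_change_def
    by (metis (mono_tags, lifting) case_prod_beta)
qed

theorem lemma2p1:
  fixes D :: "('d,'e) category" and C :: "('c,'f) category"
    and L :: "('d,'e,'c,'f) cfunctor" and R :: "('c,'f,'d,'e) cfunctor"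
    and \<eta> :: "'d \<Rightarrow> 'e" and \<epsilon> :: "'c \<Rightarrow> 'f"
    and W V :: 'd and f :: 'e
  assumes "is_category D" and "is_category C"
    and "is_adjunction D C L R \<eta> \<epsilon>"
    and "cartesian D"
    and "W \<in> Ob D"
    and pb_ex: "\<forall>Z. \<forall>h\<in>hom C Z (FO L W). \<exists>P p1 p2. is_pullback D (\<eta> W) (FA R h) P p1 p2"
    and counit_iso: "\<forall>Z. \<forall>h\<in>hom C Z (FO L W). is_iso C (sl_counit D C L R \<eta> \<epsilon> W h)"
    and unit_iso: "\<forall>X. \<forall>\<phi>\<in>hom C X (FO L W).
        is_iso D (sl_unit D L R \<eta> W (base_change D W (Dom D (sl_R D R \<eta> W \<phi>))))"
    and "f \<in> hom D V W"
  shows "is_iso D (sl_unit D L R \<eta> W (base_change D W V)) \<longleftrightarrow> is_iso D (sl_unit D L R \<eta> W f)"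
proof -
  interpret sl D C L R \<eta> \<epsilon> W using assms by unfold_locales auto
  note catD = assms(1) and catC = assms(2) and cart = assms(4) and f = assms(9)
  have Vo: "V \<in> Ob D" using ob_dom[OF catD f] .
  obtain E \<pi>2 where pE: "is_product D W V E (base_change D W V) \<pi>2"
    using bc_prod[OF cart W Vo] by blast
  have hE: "base_change D W V \<in> hom D E W" using pE unfolding is_product_def by auto
  have Gphi: "Good (base_change D W P)" if phi: "\<phi> \<in> hom C X (FO L W)"
      and sp: "sl_pb D R \<eta> W \<phi> = (P, p1, p2)" for \<phi> X P p1 p2
  proof -
    have pb: "is_pullback D (\<eta> W) (FA R \<phi>) P p1 p2" using slpb[OF phi sp] .
    have dP: "Dom D (sl_R D R \<eta> W \<phi>) = P"
      using pb sp unfolding sl_R_def is_pullback_def by (simp add: hom_def)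
    have Po: "P \<in> Ob D" using pb_homs(3)[OF catD pb] ob_dom[OF catD] by blast
    obtain P' q2 where q: "is_product D W P P' (base_change D W P) q2"
      using bc_prod[OF cart W Po] by blast
    have "base_change D W P \<in> hom D P' W" using q unfolding is_product_def by auto
    then show ?thesis using unit_iso phi dP sl_unit_iff by metis
  qed
  have "Good (base_change D W V) \<longleftrightarrow> Good f"
  proof
    assume G: "Good (base_change D W V)"
    have LWo: "FO L W \<in> Ob C" using functor_hom[OF FL id_hom[OF catD W]] ob_dom[OF catC] by blast
    define \<phi> where "\<phi> = Idt C (FO L W)"
    have phi: "\<phi> \<in> hom C (FO L W) (FO L W)" using id_hom[OF catC LWo] \<phi>_def by simp
    obtain P a1 a2 where sp: "sl_pb D R \<eta> W \<phi> = (P, a1, a2)" by (metis prod_cases3)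
    have GP: "Good (base_change D W P)" using Gphi[OF phi sp] .
    have pb: "is_pullback D (\<eta> W) (Idt D (T W)) P a1 a2"
      using slpb[OF phi sp] functor_id[OF FR LWo] \<phi>_def by simp
    have Po: "P \<in> Ob D" using pb_homs(3)[OF catD pb] ob_dom[OF catD] by blast
    have eW: "\<eta> W \<in> hom D W (T W)" using eta_hom[OF W] .
    have TWo: "T W \<in> Ob D" using ob_cod[OF catD eW] .
    have idT: "Idt D (T W) \<in> hom D (T W) (T W)" using id_hom[OF catD TWo] .
    have x: "Idt D W \<in> hom D W (Dom D (\<eta> W))" using id_hom[OF catD W] eW by (simp add: hom_def)
    have y: "\<eta> W \<in> hom D W (Dom D (Idt D (T W)))" using eW idT by (simp add: hom_def)
    have eq: "Cmp D (\<eta> W) (Idt D W) = Cmp D (Idt D (T W)) (\<eta> W)"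
      using id_l[OF catD eW] id_r[OF catD eW] by simp
    obtain m where m: "m \<in> hom D W P" "Cmp D a1 m = Idt D W" "Cmp D a2 m = \<eta> W"
      using pb_ex1[OF catD pb x y eq] by blast
    have pbW: "is_pullback D (\<eta> W) (Idt D (T W)) W (Idt D W) (\<eta> W)"
      unfolding is_pullback_def
    proof (intro conjI allI impI)
      show "\<eta> W \<in> Ar D" "Idt D (T W) \<in> Ar D" "Cod D (\<eta> W) = Cod D (Idt D (T W))"
        using eW idT by (auto simp: hom_def)
      show "Idt D W \<in> hom D W (Dom D (\<eta> W))" "\<eta> W \<in> hom D W (Dom D (Idt D (T W)))"
        "Cmp D (\<eta> W) (Idt D W) = Cmp D (Idt D (T W)) (\<eta> W)" using x y eq by auto
      fix Q x y assume x: "x \<in> hom D Q (Dom D (\<eta> W))" and y: "y \<in> hom D Q (Dom D (Idt D (T W)))"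
        and e: "Cmp D (\<eta> W) x = Cmp D (Idt D (T W)) y"
      have x: "x \<in> hom D Q W" using x eW by (simp add: hom_def)
      have y: "y \<in> hom D Q (T W)" using y idT by (simp add: hom_def)
      show "\<exists>!u. u \<in> hom D Q W \<and> Cmp D (Idt D W) u = x \<and> Cmp D (\<eta> W) u = y"
        using x e id_l[OF catD x] id_l[OF catD y] id_l[OF catD] by (metis)
    qed
    have mi: "is_iso D m" using pb_iso_iff[OF catD pb x y eq m(1-3)] pbW by simp
    obtain M \<rho>2 where pM: "is_product D W W M (base_change D W W) \<rho>2"
      using bc_prod[OF cart W W] by blast
    obtain P' q2 where q: "is_product D W P P' (base_change D W P) q2"
      using bc_prod[OF cart W Po] by blast
    have GM: "Good (base_change D W W)" using Good_prod[OF pM q m(1) mi GP] .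
    show "Good f" using core[OF pE pM G GM f] .
  next
    assume G: "Good f"
    define \<phi> where "\<phi> = FA L f"
    have phi: "\<phi> \<in> hom C (FO L V) (FO L W)" using functor_hom[OF FL f] \<phi>_def by simp
    obtain P p1 p2 where sp: "sl_pb D R \<eta> W \<phi> = (P, p1, p2)" by (metis prod_cases3)
    have GP: "Good (base_change D W P)" using Gphi[OF phi sp] .
    have pb: "is_pullback D (\<eta> W) (RL f) P p1 p2" using slpb[OF phi sp] \<phi>_def by simp
    have Po: "P \<in> Ob D" using pb_homs(3)[OF catD pb] ob_dom[OF catD] by blast
    have pbV: "is_pullback D (\<eta> W) (RL f) V f (\<eta> V)" using G f unfolding Good_def by (simp add: hom_def)
    have x: "f \<in> hom D V (Dom D (\<eta> W))" and y: "\<eta> V \<in> hom D V (Dom D (RL f))"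
      and eq: "Cmp D (\<eta> W) f = Cmp D (RL f) (\<eta> V)" using pb_homs[OF catD pbV] by auto
    obtain m where m: "m \<in> hom D V P" "Cmp D p1 m = f" "Cmp D p2 m = \<eta> V"
      using pb_ex1[OF catD pb x y eq] by blast
    have mi: "is_iso D m" using pb_iso_iff[OF catD pb x y eq m(1-3)] pbV by simp
    obtain P' q2 where q: "is_product D W P P' (base_change D W P) q2"
      using bc_prod[OF cart W Po] by blast
    show "Good (base_change D W V)" using Good_prod[OF pE q m(1) mi GP] .
  qed
  then show ?thesis using sl_unit_iff[OF hE] sl_unit_iff[OF f] by simp
qed

end
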